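(* Let $f:\mathbb{R}^n\to\mathbb{R}^n$ be continuous and $\mu\ge0$. Suppose that: (i) for every $x\in\mathbb{R}^n$, $f$ admits a strict $\mu$-estimator at $x$ of the form $\widetilde h_x(t)=f(x)+h_x(t-x)$ with $h_x:\mathbb{R}^n\to\mathbb{R}^n$; (ii) for every $x\in\mathbb{R}^n$ and every $w\in\mathbb{R}^n$, $\langle w,h_x\rangle\in\mathrm{DCH}(\mathbb{R}^n)$; (iii) for every $x\in\mathbb{R}^n$, $h_x$ satisfies condition (C) around $0$; (iv) $\flat_f:=\inf_{x\in\mathbb{R}^n}\operatorname{dist}\big(0,D^{\star}h_x(0)(S)\big)>\mu$, where $S$ is the unit sphere of $\mathbb{R}^n$; (v) for every $x\in\mathbb{R}^n$, $h_x$ is metrically injective around $0$ with $\operatorname{inj}(h_x,0)>\mu$. Then $f$ is a bijection of $\mathbb{R}^n$ onto $\mathbb{R}^n$ and $f^{-1}$ is Lipschitz continuous on $\mathbb{R}^n$ with constant $(\flat_f-\mu)^{-1}$.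
   Context: $\operatorname{lip}(g,\bar x)$ is the infimum of all $\ell>0$ such that $\|g(x_1)-g(x_2)\|\le\ell\|x_1-x_2\|$ on some neighbourhood of $\bar x$ ($+\infty$ if none). $h$ is a strict $\mu$-estimator of $f$ at $\bar x$ if $h(\bar x)=f(\bar x)$ and $\operatorname{lip}(f-h,\bar x)\le\mu$. $\mathrm{Sub}(\mathbb{R}^n)$ is the cone of sublinear (positively homogeneous convex real-valued) functions on $\mathbb{R}^n$, $\mathrm{DCH}(\mathbb{R}^n)=\mathrm{Sub}(\mathbb{R}^n)-\mathrm{Sub}(\mathbb{R}^n)$. The star-difference of convex compact (or empty) sets is $A\stackrel{*}{-}B=\{x: x+B\subseteq A\}$. A mapping $g:\mathbb{R}^n\to\mathbb{R}^m$ is scalarly quasidifferentiable at $x$ if for each $w\in\mathbb{R}^m$, $\langle w,g\rangle$ is directionally differentiable at $x$ in every direction and there exist $p_w,q_w\in\mathrm{Sub}(\mathbb{R}^n)$ with $\langle w,g\rangle'(x;v)=p_w(v)-q_w(v)$ for all $v$; its star-coquasiderivative is $D^{\star}g(x)(w)=\partial p_w(0)\stackrel{*}{-}\partial q_w(0)$ (convex subdifferentials; independent of the chosen pair), and $D^{\star}g(x)(A)=\bigcup_{w\in A}D^{\star}g(x)(w)$. $g$ satisfies condition (C) around $\bar x$ if $g$ is scalarly quasidifferentiable near $\bar x$ and $x\mapsto D^{\star}g(x)(S_m)$ ($S_m$ the unit sphere of $\mathbb{R}^m$) is upper semicontinuous at $\bar x$: for every open $O\supseteq D^{\star}g(\bar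 x)(S_m)$ there is $\delta>0$ with $D^{\star}g(x)(S_m)\subseteq O$ whenever $\|x-\bar x\|\le\delta$. $\operatorname{dist}(0,\emptyset)=+\infty$. $g$ is metrically injective around $\bar x$ if there exist $\beta,\delta>0$ with $\|g(x_1)-g(x_2)\|\ge\beta\|x_1-x_2\|$ for all $x_1,x_2$ within distance $\delta$ of $\bar x$; $\operatorname{inj}(g,\bar x)$ is the supremum of such $\beta$. *)

theory Defs
  imports "HOL-Analysis.Analysis" "HOL-Library.Extended_Real"
begin

text \<open>Lipschitz modulus lip(g, xbar) as an extended real (+infinity if no constant works).\<close>
definition lip :: "('a::real_normed_vector \<Rightarrow> 'b::real_normed_vector) \<Rightarrow> 'a \<Rightarrow> ereal" where
  "lip g xb = Inf (ereal ` {l. l > 0 \<and> (\<exists>\<delta>>0. \<forall>x1\<in>ball xb \<delta>. \<forall>x2\<in>ball xb \<delta>.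
        norm (g x1 - g x2) \<le> l * norm (x1 - x2))})"

definition strict_estimator :: "('a::real_normed_vector \<Rightarrow> 'b::real_normed_vector) \<Rightarrow> ('a \<Rightarrow> 'b) \<Rightarrow> 'a \<Rightarrow> real \<Rightarrow> bool" where
  "strict_estimator h f xb \<mu> \<longleftrightarrow> h xb = f xb \<and> lip (\<lambda>t. f t - h t) xb \<le> ereal \<mu>"

definition sublinear :: "('a::real_vector \<Rightarrow> real) \<Rightarrow> bool" where
  "sublinear p \<longleftrightarrow> convex_on UNIV p \<and> (\<forall>t>0. \<forall>v. p (t *\<^sub>R v) = t * p v)"

definition DCH :: "('a::real_vector \<Rightarrow> real) set" where
  "DCH = {\<phi>. \<exists>p q. sublinear p \<and> sublinear q \<and> \<phi> = (\<lambda>v. p v - q v)}"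

definition star_diff :: "'a::real_vector set \<Rightarrow> 'a set \<Rightarrow> 'a set" where
  "star_diff A B = {x. (\<lambda>b. x + b) ` B \<subseteq> A}"

definition subdiff :: "('a::real_inner \<Rightarrow> real) \<Rightarrow> 'a \<Rightarrow> 'a set" where
  "subdiff \<phi> x = {s. \<forall>y. \<phi> y \<ge> \<phi> x + s \<bullet> (y - x)}"

definition qd_pair :: "('a::euclidean_space \<Rightarrow> 'b::euclidean_space) \<Rightarrow> 'a \<Rightarrow> 'b \<Rightarrow> ('a \<Rightarrow> real) \<Rightarrow> ('a \<Rightarrow> real) \<Rightarrow> bool" where
  "qd_pair g x w p q \<longleftrightarrow> sublinear p \<and> sublinear q \<and>
     (\<forall>v. ((\<lambda>t. (w \<bullet> g (x + t *\<^sub>R v) - w \<bullet> g x) / t) \<longlongrightarrow> p v - q v) (at_right 0))"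

definition scalarly_qd :: "('a::euclidean_space \<Rightarrow> 'b::euclidean_space) \<Rightarrow> 'a \<Rightarrow> bool" where
  "scalarly_qd g x \<longleftrightarrow> (\<forall>w. \<exists>p q. qd_pair g x w p q)"

text \<open>Star-coquasiderivative D*g(x)(w) (independent of the chosen pair).\<close>
definition star_coqd :: "('a::euclidean_space \<Rightarrow> 'b::euclidean_space) \<Rightarrow> 'a \<Rightarrow> 'b \<Rightarrow> 'a set" where
  "star_coqd g x w = (let pq = (SOME pq. qd_pair g x w (fst pq) (snd pq))
      in star_diff (subdiff (fst pq) 0) (subdiff (snd pq) 0))"

definition star_coqd_set :: "('a::euclidean_space \<Rightarrow> 'b::euclidean_space) \<Rightarrow> 'a \<Rightarrow> 'b set \<Rightarrow> 'a set" where
  "star_coqd_set g x A = (\<Union>w\<in>A. star_coqd g x w)"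

definition condC :: "('a::euclidean_space \<Rightarrow> 'b::euclidean_space) \<Rightarrow> 'a \<Rightarrow> bool" where
  "condC g xb \<longleftrightarrow> (\<exists>\<delta>>0. \<forall>x\<in>ball xb \<delta>. scalarly_qd g x) \<and>
     (\<forall>U. open U \<and> star_coqd_set g xb (sphere 0 1) \<subseteq> U \<longrightarrow>
        (\<exists>\<delta>>0. \<forall>x. norm (x - xb) \<le> \<delta> \<longrightarrow> star_coqd_set g x (sphere 0 1) \<subseteq> U))"

definition dist0 :: "'a::real_normed_vector set \<Rightarrow> ereal" where
  "dist0 A = (if A = {} then \<infinity> else ereal (infdist 0 A))"

definition metric_inj_consts :: "('a::real_normed_vector \<Rightarrow> 'b::real_normed_vector) \<Rightarrow> 'a \<Rightarrow> real set" where
  "metric_inj_consts g xb = {\<beta>. \<beta> > 0 \<and> (\<exists>\<delta>>0. \<forall>x1 x2. dist x1 xb \<le> \<delta> \<and> dist x2 xb \<le> \<delta> \<longrightarrow>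
        norm (g x1 - g x2) \<ge> \<beta> * norm (x1 - x2))}"

definition metrically_injective :: "('a::real_normed_vector \<Rightarrow> 'b::real_normed_vector) \<Rightarrow> 'a \<Rightarrow> bool" where
  "metrically_injective g xb \<longleftrightarrow> metric_inj_consts g xb \<noteq> {}"

definition inj_mod :: "('a::real_normed_vector \<Rightarrow> 'b::real_normed_vector) \<Rightarrow> 'a \<Rightarrow> ereal" where
  "inj_mod g xb = Sup (ereal ` metric_inj_consts g xb)"

end

theory Submission
  imports Defs
begin


definition LE :: "('a::euclidean_space \<Rightarrow> 'a) \<Rightarrow> real \<Rightarrow> bool" where
  "LE f \<kappa> \<longleftrightarrow> (\<forall>x. \<exists>\<delta>>0. \<forall>s\<in>ball x \<delta>. \<forall>t\<in>ball x \<delta>. \<kappa> * norm (s - t) \<le> norm (f s - f t))"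

lemma LE_uniform:
  fixes f :: "'a::euclidean_space \<Rightarrow> 'a"
  assumes "LE f \<kappa>" "compact K"
  shows "\<exists>\<delta>0>0. \<forall>z\<in>K. \<forall>s\<in>ball z \<delta>0. \<forall>t\<in>ball z \<delta>0. \<kappa> * norm (s - t) \<le> norm (f s - f t)"
proof -
  obtain d where d: "\<And>x. d x > 0" "\<And>x s t. s\<in>ball x (d x) \<Longrightarrow> t\<in>ball x (d x) \<Longrightarrow> \<kappa> * norm (s - t) \<le> norm (f s - f t)"
    using assms(1) unfolding LE_def by metis
  have cov: "K \<subseteq> (\<Union>x\<in>K. ball x (d x / 2))" using d(1) by force
  obtain D where D: "D \<subseteq> K" "finite D" "K \<subseteq> (\<Union>x\<in>D. ball x (d x / 2))"
    using compactE_image[OF assms(2) _ cov] by blast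
  show ?thesis
  proof (cases "D = {}")
    case True
    then show ?thesis using D by (intro exI[of _ 1]) auto
  next
    case False
    define \<delta>0 where "\<delta>0 = Min ((\<lambda>x. d x / 2) ` D)"
    have pos: "\<delta>0 > 0" unfolding \<delta>0_def using D False d(1) by (subst Min_gr_iff) auto
    show ?thesis
    proof (intro exI[of _ \<delta>0] conjI pos ballI)
      fix z s t assume z: "z \<in> K" and s: "s \<in> ball z \<delta>0" and t: "t \<in> ball z \<delta>0"
      obtain x where x: "x \<in> D" "z \<in> ball x (d x / 2)" using D z by blast
      have "\<delta>0 \<le> d x / 2" unfolding \<delta>0_def using x D by (intro Min_le) auto
      then have "s \<in> ball x (d x)" "t \<in> ball x (d x)" using s t x(2)
        using dist_triangle[of x s z] dist_triangle[of x t z] by auto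
      then show "\<kappa> * norm (s - t) \<le> norm (f s - f t)" using d(2) by blast
    qed
  qed
qed

lemma local_onto:
  fixes f :: "'a::euclidean_space \<Rightarrow> 'a"
  assumes contf: "continuous_on UNIV f" and k: "\<kappa> > 0"
    and ex: "\<forall>s\<in>ball z \<delta>0. \<forall>t\<in>ball z \<delta>0. \<kappa> * norm (s - t) \<le> norm (f s - f t)"
    and r: "0 < r" "r < \<delta>0"
  shows "ball (f z) (\<kappa> * r) \<subseteq> f ` ball z r"
proof -
  have sub: "cball z r \<subseteq> ball z \<delta>0" using r by auto
  have inj: "inj_on f (ball z r)"
  proof (rule inj_onI)
    fix s t assume "s \<in> ball z r" "t \<in> ball z r" "f s = f t"
    then have "s \<in> ball z \<delta>0" "t \<in> ball z \<delta>0" using r by auto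
    then have "\<kappa> * norm (s - t) \<le> 0" using ex \<open>f s = f t\<close> by fastforce
    then show "s = t" using k by (simp add: mult_le_0_iff)
  qed
  have op: "open (f ` ball z r)"
    by (rule invariance_of_domain[OF continuous_on_subset[OF contf] open_ball inj]) auto
  define B where "B = ball (f z) (\<kappa> * r)"
  define T where "T = B \<inter> f ` ball z r"
  have T2: "T = B \<inter> f ` cball z r"
  proof
    show "T \<subseteq> B \<inter> f ` cball z r" unfolding T_def by auto
    show "B \<inter> f ` cball z r \<subseteq> T"
    proof
      fix v assume v: "v \<in> B \<inter> f ` cball z r"
      then obtain w where w: "w \<in> cball z r" "v = f w" by auto
      have "w \<in> ball z r"
      proof (rule ccontr)
        assume "w \<notin> ball z r"
        then have "norm (w - z) = r" using w by (auto simp: dist_norm norm_minus_commute)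
        moreover have "\<kappa> * norm (w - z) \<le> norm (f w - f z)" using ex sub w(1) r by auto
        moreover have "norm (f w - f z) < \<kappa> * r" using v w unfolding B_def by (auto simp: dist_norm norm_minus_commute)
        ultimately show False by simp
      qed
      then show "v \<in> T" using v w unfolding T_def by auto
    qed
  qed
  have "openin (top_of_set B) T" unfolding T_def using op by (simp add: openin_open_Int)
  moreover have "closedin (top_of_set B) T" unfolding T2
    by (intro closedin_closed_Int compact_imp_closed compact_continuous_image continuous_on_subset[OF contf]) auto
  moreover have "f z \<in> T" unfolding T_def B_def using r k by auto
  moreover have "connected B" unfolding B_def by simp
  ultimately have "T = B" using connected_clopen by blast
  then show ?thesis unfolding T_def B_def by auto
qed

definition lift :: "('a::euclidean_space \<Rightarrow> 'a) \<Rightarrow> real \<Rightarrow> 'a \<Rightarrow> 'a \<Rightarrow> real \<Rightarrow> (real \<Rightarrow> 'a) \<Rightarrow> bool" where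
  "lift f \<kappa> x0 u T l \<longleftrightarrow> continuous_on {0..T} l \<and> l 0 = x0 \<and>
     (\<forall>t\<in>{0..T}. f (l t) = f x0 + t *\<^sub>R (u - f x0) \<and> norm (l t - x0) \<le> t * (norm (u - f x0) / \<kappa>))"

lemma lift_step:
  fixes f :: "'a::euclidean_space \<Rightarrow> 'a"
  assumes contf: "continuous_on UNIV f" and k: "\<kappa> > 0"
    and lf: "lift f \<kappa> x0 u T l" and T: "0 \<le> T" "T \<le> T'"
    and ex: "\<forall>s\<in>ball (l T) \<delta>0. \<forall>t\<in>ball (l T) \<delta>0. \<kappa> * norm (s - t) \<le> norm (f s - f t)"
    and r0: "0 < r0" "r0 < \<delta>0"
    and eps: "(T' - T) * norm (u - f x0) < \<kappa> * r0"
  shows "\<exists>l'. lift f \<kappa> x0 u T' l'"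
proof -
  define y0 where "y0 = f x0"
  define g where "g t = y0 + t *\<^sub>R (u - y0)" for t
  define M where "M = norm (u - y0) / \<kappa>"
  define z where "z = l T"
  have gd: "norm (g t - g s) = \<bar>t - s\<bar> * norm (u - y0)" for t s
    unfolding g_def by (simp add: scaleR_diff_left[symmetric])
  have fz: "f z = g T" using lf T unfolding lift_def z_def g_def y0_def by auto
  have onto: "ball (f z) (\<kappa> * r0) \<subseteq> f ` ball z r0"
    using local_onto[OF contf k _ r0] ex unfolding z_def by blast
  define \<phi> where "\<phi> v = (SOME w. w \<in> ball z r0 \<and> f w = v)" for v
  have \<phi>: "\<phi> v \<in> ball z r0 \<and> f (\<phi> v) = v" if vin: "v \<in> ball (f z) (\<kappa> * r0)" for v
  proof -
    obtain w where "w \<in> ball z r0" "f w = v" using onto vin by blast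
    then show ?thesis unfolding \<phi>_def by (metis (mono_tags, lifting) someI)
  qed
  have ing: "g t \<in> ball (f z) (\<kappa> * r0)" if "t \<in> {T..T'}" for t
  proof -
    have "norm (g t - g T) \<le> (T' - T) * norm (u - y0)" using that gd[of t T] by (auto intro: mult_right_mono)
    then show ?thesis using fz eps unfolding y0_def by (simp add: dist_norm norm_minus_commute)
  qed
  have lipg: "\<kappa> * norm (\<phi> (g t) - \<phi> (g s)) \<le> \<bar>t - s\<bar> * norm (u - y0)" if "t \<in> {T..T'}" "s \<in> {T..T'}" for t s
  proof -
    have "\<phi> (g t) \<in> ball z \<delta>0" "\<phi> (g s) \<in> ball z \<delta>0" using \<phi>[OF ing[OF that(1)]] \<phi>[OF ing[OF that(2)]] r0 by auto
    then have "\<kappa> * norm (\<phi> (g t) - \<phi> (g s)) \<le> norm (f (\<phi> (g t)) - f (\<phi> (g s)))" using ex unfolding z_def by blast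
    also have "\<dots> = norm (g t - g s)" using \<phi>[OF ing[OF that(1)]] \<phi>[OF ing[OF that(2)]] by simp
    finally show ?thesis using gd by simp
  qed
  have \<phi>z: "\<phi> (g T) = z"
  proof -
    have "g T \<in> ball (f z) (\<kappa> * r0)" using fz k r0 by simp
    then have a: "\<phi> (g T) \<in> ball z r0" "f (\<phi> (g T)) = f z" using \<phi> fz by auto
    then have a: "\<phi> (g T) \<in> ball z \<delta>0" "f (\<phi> (g T)) = f z" using r0 by auto
    have "z \<in> ball z \<delta>0" using r0 by simp
    then have "\<kappa> * norm (\<phi> (g T) - z) \<le> 0" using ex a unfolding z_def by fastforce
    then show ?thesis using k by (simp add: mult_le_0_iff)
  qed
  define l' where "l' t = (if t \<le> T then l t else \<phi> (g t))" for t
  have c1: "continuous_on {0..T} l" using lf unfolding lift_def by simp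
  have c2: "continuous_on {T..T'} (\<lambda>t. \<phi> (g t))"
  proof (rule lipschitz_on_continuous_on)
    show "(M)-lipschitz_on {T..T'} (\<lambda>t. \<phi> (g t))"
    proof (rule lipschitz_onI)
      fix t s assume "t \<in> {T..T'}" "s \<in> {T..T'}"
      from lipg[OF this] k show "dist (\<phi> (g t)) (\<phi> (g s)) \<le> M * dist t s"
        unfolding M_def dist_norm dist_real_def by (simp add: field_simps mult.commute)
    next
      show "0 \<le> M" unfolding M_def using k by simp
    qed
  qed
  have cl': "continuous_on {0..T'} l'"
    unfolding l'_def
  proof (rule continuous_on_cases_le[where h="\<lambda>t. t"])
    show "continuous_on {t \<in> {0..T'}. t \<le> T} l" using c1 by (rule continuous_on_subset) auto
    show "continuous_on {t \<in> {0..T'}. T \<le> t} (\<lambda>t. \<phi> (g t))" using c2 by (rule continuous_on_subset) auto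
  qed (auto simp: \<phi>z z_def)
  have l0: "l' 0 = x0" using lf T unfolding lift_def l'_def by simp
  have "\<forall>t\<in>{0..T'}. f (l' t) = f x0 + t *\<^sub>R (u - f x0) \<and> norm (l' t - x0) \<le> t * (norm (u - f x0) / \<kappa>)"
  proof
    fix t assume t: "t \<in> {0..T'}"
    show "f (l' t) = f x0 + t *\<^sub>R (u - f x0) \<and> norm (l' t - x0) \<le> t * (norm (u - f x0) / \<kappa>)"
    proof (cases "t \<le> T")
      case True
      then show ?thesis using lf t unfolding lift_def l'_def by auto
    next
      case False
      then have tT: "t \<in> {T..T'}" using t by auto
      have 1: "f (l' t) = g t" using False \<phi>[OF ing[OF tT]] unfolding l'_def by simp
      have "norm (l' t - x0) \<le> norm (\<phi> (g t) - \<phi> (g T)) + norm (z - x0)"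
        using False norm_triangle_ineq[of "\<phi> (g t) - z" "z - x0"] unfolding l'_def \<phi>z by simp
      also have "\<dots> \<le> (t - T) * M + T * M"
      proof (rule add_mono)
        show "norm (\<phi> (g t) - \<phi> (g T)) \<le> (t - T) * M"
          using lipg[OF tT, of T] T False k unfolding M_def by (simp add: field_simps)
        show "norm (z - x0) \<le> T * M" using lf T unfolding lift_def z_def M_def y0_def by auto
      qed
      also have "\<dots> = t * M" by (simp add: algebra_simps)
      finally show ?thesis using 1 unfolding g_def M_def y0_def by simp
    qed
  qed
  then have "lift f \<kappa> x0 u T' l'" unfolding lift_def using cl' l0 by blast
  then show ?thesis by blast
qed

lemma lift_exists:
  fixes f :: "'a::euclidean_space \<Rightarrow> 'a"
  assumes contf: "continuous_on UNIV f" and k: "\<kappa> > 0" and le: "LE f \<kappa>"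
  shows "\<exists>l. lift f \<kappa> x0 u 1 l"
proof -
  define N where "N = norm (u - f x0)"
  define M where "M = N / \<kappa>"
  have M0: "M \<ge> 0" unfolding M_def N_def using k by simp
  obtain \<delta>0 where d0: "\<delta>0 > 0" and ex: "\<forall>z\<in>cball x0 (M + 1). \<forall>s\<in>ball z \<delta>0. \<forall>t\<in>ball z \<delta>0. \<kappa> * norm (s - t) \<le> norm (f s - f t)"
    using LE_uniform[OF le compact_cball] by blast
  define r0 where "r0 = \<delta>0 / 2"
  define \<epsilon> where "\<epsilon> = \<kappa> * r0 / (N + 1)"
  have N0: "N \<ge> 0" unfolding N_def by simp
  have r0: "0 < r0" "r0 < \<delta>0" unfolding r0_def using d0 by auto
  have e0: "\<epsilon> > 0" unfolding \<epsilon>_def using k r0 N0 by simp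
  have eN: "\<epsilon> * N < \<kappa> * r0"
  proof -
    have "\<epsilon> * N = \<kappa> * r0 * (N / (N + 1))" unfolding \<epsilon>_def by simp
    also have "\<dots> < \<kappa> * r0 * 1" using k r0 N0 by (intro mult_strict_left_mono) auto
    finally show ?thesis by simp
  qed
  have "\<exists>l. lift f \<kappa> x0 u (min 1 (real n * \<epsilon>)) l" for n
  proof (induction n)
    case 0
    have "lift f \<kappa> x0 u 0 (\<lambda>t. x0)" unfolding lift_def by auto
    then show ?case by (simp del: min.absorb1 min.absorb2 add: min_def) blast
  next
    case (Suc n)
    then obtain l where l: "lift f \<kappa> x0 u (min 1 (real n * \<epsilon>)) l" by blast
    define T where "T = min 1 (real n * \<epsilon>)"
    define T' where "T' = min 1 (real (Suc n) * \<epsilon>)"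
    have T: "0 \<le> T" "T \<le> T'" "T \<le> 1" unfolding T_def T'_def using e0 by (auto simp: min_def field_simps)
    have TT: "T' - T \<le> \<epsilon>" unfolding T_def T'_def using e0 by (auto simp: min_def field_simps)
    have "norm (l T - x0) \<le> T * M" using l T unfolding lift_def T_def M_def N_def by auto
    also have "\<dots> \<le> M" using T M0 by (simp add: mult_left_le_one_le)
    finally have "l T \<in> cball x0 (M + 1)" by (simp add: dist_norm norm_minus_commute)
    then have exz: "\<forall>s\<in>ball (l T) \<delta>0. \<forall>t\<in>ball (l T) \<delta>0. \<kappa> * norm (s - t) \<le> norm (f s - f t)" using ex by blast
    have "(T' - T) * N \<le> \<epsilon> * N" using TT N0 by (rule mult_right_mono)
    then have "(T' - T) * norm (u - f x0) < \<kappa> * r0" using eN unfolding N_def by simp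
    from lift_step[OF contf k l[folded T_def] T(1,2) exz r0 this] show ?case unfolding T'_def .
  qed
  moreover have "min 1 (real (nat \<lceil>1 / \<epsilon>\<rceil>) * \<epsilon>) = 1"
  proof -
    have "1 / \<epsilon> \<le> real (nat \<lceil>1 / \<epsilon>\<rceil>)" by linarith
    then have "1 / \<epsilon> * \<epsilon> \<le> real (nat \<lceil>1 / \<epsilon>\<rceil>) * \<epsilon>" using e0 by (intro mult_right_mono) auto
    then have "1 \<le> real (nat \<lceil>1 / \<epsilon>\<rceil>) * \<epsilon>" using e0 by simp
    then show ?thesis by simp
  qed
  ultimately show ?thesis by metis
qed

lemma G_loclip:
  fixes f :: "'a::euclidean_space \<Rightarrow> 'a"
  assumes contf: "continuous_on UNIV f" and k: "\<kappa> > 0" and le: "LE f \<kappa>"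
    and L: "\<And>u. lift f \<kappa> x0 u 1 (L u)"
  shows "\<exists>\<epsilon>>0. \<forall>u'. norm (u' - u) < \<epsilon> \<longrightarrow> \<kappa> * norm (L u' 1 - L u 1) \<le> norm (u' - u)"
proof -
  define N where "N = norm (u - f x0)"
  obtain \<delta>0 where d0: "\<delta>0 > 0" and ex: "\<forall>z\<in>cball x0 (N / \<kappa>). \<forall>s\<in>ball z \<delta>0. \<forall>t\<in>ball z \<delta>0. \<kappa> * norm (s - t) \<le> norm (f s - f t)"
    using LE_uniform[OF le compact_cball] by blast
  define \<epsilon> where "\<epsilon> = \<kappa> * \<delta>0 / 2"
  have e0: "\<epsilon> > 0" unfolding \<epsilon>_def using k d0 by simp
  show ?thesis
  proof (intro exI[of _ \<epsilon>] conjI e0 allI impI)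
    fix u' assume u': "norm (u' - u) < \<epsilon>"
    define D where "D t = norm (L u t - L u' t)" for t
    have cD: "continuous_on {0..1} D" unfolding D_def using L[of u] L[of u'] unfolding lift_def
      by (intro continuous_intros) auto
    define A where "A = {0..1} \<inter> D -` {..<\<delta>0}"
    define B where "B = {0..1} \<inter> (\<lambda>t. \<kappa> * D t - t * norm (u - u')) -` {..0}"
    have "openin (top_of_set {0..1}) A" unfolding A_def by (rule continuous_openin_preimage_gen[OF cD]) auto
    moreover have "closedin (top_of_set {0..1}) B" unfolding B_def
      by (rule continuous_closedin_preimage) (auto intro!: continuous_intros cD)
    moreover have AB: "A = B"
    proof
      show "A \<subseteq> B"
      proof
        fix t assume t: "t \<in> A"
        then have t01: "t \<in> {0..1}" "D t < \<delta>0" unfolding A_def by auto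
        have "norm (L u t - x0) \<le> t * (N / \<kappa>)" using L[of u] t01 unfolding lift_def N_def by auto
        also have "\<dots> \<le> N / \<kappa>" using t01 k unfolding N_def by (intro mult_left_le_one_le) auto
        finally have z: "L u t \<in> cball x0 (N / \<kappa>)" by (simp add: dist_norm norm_minus_commute)
        have "L u t \<in> ball (L u t) \<delta>0" "L u' t \<in> ball (L u t) \<delta>0" using d0 t01 unfolding D_def by (auto simp: dist_norm)
        then have "\<kappa> * D t \<le> norm (f (L u t) - f (L u' t))" using ex z unfolding D_def by blast
        also have "\<dots> = norm (t *\<^sub>R (u - u'))"
        proof -
          have e1: "f (L u t) = f x0 + t *\<^sub>R (u - f x0)" and e2: "f (L u' t) = f x0 + t *\<^sub>R (u' - f x0)"
            using L[of u] L[of u'] t01 unfolding lift_def by blast+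
          have "f (L u t) - f (L u' t) = t *\<^sub>R (u - u')" unfolding e1 e2 by (simp add: scaleR_diff_right)
          then show ?thesis by simp
        qed
        also have "\<dots> = t * norm (u - u')" using t01 by simp
        finally show "t \<in> B" unfolding B_def using t01 by auto
      qed
    next
      show "B \<subseteq> A"
      proof
        fix t assume t: "t \<in> B"
        then have t01: "t \<in> {0..1}" "\<kappa> * D t \<le> t * norm (u - u')" unfolding B_def by auto
        have "t * norm (u - u') \<le> norm (u - u')" using t01 by (simp add: mult_left_le_one_le)
        also have "\<dots> < \<kappa> * \<delta>0" using u' d0 k unfolding \<epsilon>_def
          by (simp add: norm_minus_commute) (smt (verit) mult_pos_pos)
        finally have "\<kappa> * D t < \<kappa> * \<delta>0" using t01 by simp
        then have "D t < \<delta>0" using k by simp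
        then show "t \<in> A" unfolding A_def using t01 by auto
      qed
    qed
    moreover have "0 \<in> A" unfolding A_def D_def using L[of u] L[of u'] d0 unfolding lift_def by auto
    ultimately have "A = {0..1}" using connected_clopen[of "{0..1::real}"] by auto
    then have "1 \<in> B" using AB by auto
    then show "\<kappa> * norm (L u' 1 - L u 1) \<le> norm (u' - u)" unfolding B_def D_def by (simp add: norm_minus_commute)
  qed
qed

lemma global_inv:
  fixes f :: "'a::euclidean_space \<Rightarrow> 'a"
  assumes contf: "continuous_on UNIV f" and k: "\<kappa> > 0" and le: "LE f \<kappa>"
  shows "bij f \<and> (\<forall>y1 y2. \<kappa> * norm (inv f y1 - inv f y2) \<le> norm (y1 - y2))"
proof -
  define x0 :: 'a where "x0 = 0"
  define L where "L u = (SOME l. lift f \<kappa> x0 u 1 l)" for u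
  have L: "lift f \<kappa> x0 u 1 (L u)" for u
    unfolding L_def using lift_exists[OF contf k le, of x0 u] by (rule someI_ex)
  define G where "G u = L u 1" for u
  have fG: "f (G u) = u" for u using L[of u] unfolding lift_def G_def by auto
  have loc: "\<exists>\<epsilon>>0. \<forall>u'. norm (u' - u) < \<epsilon> \<longrightarrow> \<kappa> * norm (G u' - G u) \<le> norm (u' - u)" for u
    using G_loclip[OF contf k le L] unfolding G_def by blast
  have cG: "continuous (at u) G" for u
    unfolding continuous_at_eps_delta
  proof (intro allI impI)
    fix e :: real assume e: "e > 0"
    obtain \<epsilon> where ep: "\<epsilon> > 0" "\<forall>u'. norm (u' - u) < \<epsilon> \<longrightarrow> \<kappa> * norm (G u' - G u) \<le> norm (u' - u)" using loc by blast
    show "\<exists>d>0. \<forall>x'. dist x' u < d \<longrightarrow> dist (G x') (G u) < e"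
    proof (intro exI[of _ "min \<epsilon> (\<kappa> * e)"] conjI allI impI)
      show "min \<epsilon> (\<kappa> * e) > 0" using ep e k by simp
      fix x' assume "dist x' u < min \<epsilon> (\<kappa> * e)"
      then have a: "norm (x' - u) < \<epsilon>" "norm (x' - u) < \<kappa> * e" by (auto simp: dist_norm)
      then have "\<kappa> * norm (G x' - G u) < \<kappa> * e" using ep by fastforce
      then show "dist (G x') (G u) < e" using k by (simp add: dist_norm)
    qed
  qed
  then have cGo: "continuous_on UNIV G" by (simp add: continuous_at_imp_continuous_on)
  have Gx0: "G (f x0) = x0" using L[of "f x0"] unfolding lift_def G_def by auto
  define A where "A = {z. G (f z) = z}"
  have cA: "closed A" unfolding A_def
    by (rule closed_Collect_eq) (auto intro: continuous_on_compose2[OF cGo contf] continuous_on_id)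
  have oA: "open A"
  proof (subst open_subopen, intro ballI)
    fix z assume z: "z \<in> A"
    obtain \<delta> where d: "\<delta> > 0" "\<forall>s\<in>ball z \<delta>. \<forall>t\<in>ball z \<delta>. \<kappa> * norm (s - t) \<le> norm (f s - f t)"
      using le unfolding LE_def by blast
    have "continuous (at z) (\<lambda>z. G (f z))"
      using contf cG by (intro continuous_at_compose[unfolded o_def, of z f G]) (auto simp: continuous_on_eq_continuous_at)
    then obtain d where dd: "d > 0" "\<forall>z'. dist z' z < d \<longrightarrow> dist (G (f z')) (G (f z)) < \<delta>"
      unfolding continuous_at_eps_delta using d(1) by blast
    show "\<exists>T. open T \<and> z \<in> T \<and> T \<subseteq> A"
    proof (intro exI[of _ "ball z (min d \<delta>)"] conjI subsetI)
      show "z \<in> ball z (min d \<delta>)" using dd d by simp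
      fix z' assume z': "z' \<in> ball z (min d \<delta>)"
      then have "dist (G (f z')) z < \<delta>" using dd z unfolding A_def by (auto simp: dist_commute)
      then have "G (f z') \<in> ball z \<delta>" "z' \<in> ball z \<delta>" using z' by (auto simp: dist_commute)
      then have "\<kappa> * norm (G (f z') - z') \<le> norm (f (G (f z')) - f z')" using d(2) by blast
      then have "\<kappa> * norm (G (f z') - z') \<le> 0" using fG by simp
      then show "z' \<in> A" using k unfolding A_def by (simp add: mult_le_0_iff)
    qed auto
  qed
  have "x0 \<in> A" using Gx0 unfolding A_def by simp
  then have "A \<noteq> {}" by blast
  moreover have "openin (top_of_set UNIV) A" using oA by (simp only: subtopology_UNIV open_openin[symmetric])
  moreover have "closedin (top_of_set UNIV) A" using cA by (simp only: subtopology_UNIV closed_closedin[symmetric])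
  ultimately
  have AU: "A = UNIV" using connected_clopen[THEN iffD1, OF connected_UNIV, rule_format, of A] by auto
  then have GF: "G (f z) = z" for z unfolding A_def by auto
  have injf: "inj f"
  proof (rule injI)
    fix a b assume "f a = f b" then show "a = b" by (metis GF)
  qed
  have surjf: "surj f" by (rule surjI[of f G]) (rule fG)
  have invG: "inv f y = G y" for y using inv_f_f[OF injf, of "G y"] fG[of y] by simp
  have "\<kappa> * norm (G y1 - G y2) \<le> norm (y1 - y2)" for y1 y2
  proof -
    define N where "N = norm (y2 - y1)"
    define p where "p t = G (y1 + t *\<^sub>R (y2 - y1))" for t
    have cp: "continuous_on {0..1} p" unfolding p_def
      by (intro continuous_on_compose2[OF cGo]) (auto intro!: continuous_intros)
    have "(N / \<kappa>)-lipschitz_on {0..1} p"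
    proof (rule locally_lipschitz_imp_lipschitz[OF cp])
      show "0 \<le> N / \<kappa>" unfolding N_def using k by simp
      fix x y :: real assume x: "x \<in> {0..<1}" and y: "y > x"
      obtain \<epsilon> where ep: "\<epsilon> > 0" "\<forall>u'. norm (u' - (y1 + x *\<^sub>R (y2 - y1))) < \<epsilon> \<longrightarrow>
          \<kappa> * norm (G u' - G (y1 + x *\<^sub>R (y2 - y1))) \<le> norm (u' - (y1 + x *\<^sub>R (y2 - y1)))"
        using loc by blast
      define z where "z = min y (x + \<epsilon> / (N + 1))"
      have N0: "N \<ge> 0" unfolding N_def by simp
      have zx: "x < z" "z \<le> y" unfolding z_def using y ep N0 by auto
      have dz: "(y1 + z *\<^sub>R (y2 - y1)) - (y1 + x *\<^sub>R (y2 - y1)) = (z - x) *\<^sub>R (y2 - y1)"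
        by (simp add: scaleR_diff_left)
      have "(z - x) * N \<le> \<epsilon> / (N + 1) * N" unfolding z_def using N0 by (intro mult_right_mono) auto
      also have "\<dots> < \<epsilon>" using ep N0 by (simp add: field_simps)
      finally have lt: "(z - x) * N < \<epsilon>" .
      have "norm ((z - x) *\<^sub>R (y2 - y1)) = (z - x) * N" using zx unfolding N_def by simp
      then have "norm ((y1 + z *\<^sub>R (y2 - y1)) - (y1 + x *\<^sub>R (y2 - y1))) < \<epsilon>" using lt dz by simp
      then have "\<kappa> * norm (p z - p x) \<le> norm ((y1 + z *\<^sub>R (y2 - y1)) - (y1 + x *\<^sub>R (y2 - y1)))"
        using ep(2) unfolding p_def by blast
      also have "\<dots> = (z - x) * N" using dz zx unfolding N_def by simp
      finally have "\<kappa> * norm (p z - p x) \<le> (z - x) * N" .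
      then have "dist (p z) (p x) \<le> N / \<kappa> * (z - x)" using k by (simp add: dist_norm field_simps)
      then show "\<exists>z\<in>{x<..y}. dist (p z) (p x) \<le> N / \<kappa> * (z - x)" using zx by auto
    qed
    then have "dist (p 1) (p 0) \<le> N / \<kappa> * dist (1::real) 0" by (rule lipschitz_onD) auto
    then show ?thesis unfolding p_def N_def using k by (simp add: dist_norm field_simps norm_minus_commute)
  qed
  then show ?thesis using injf surjf invG unfolding bij_def by simp
qed



lemma sublinear_zero: "sublinear p \<Longrightarrow> p 0 = 0"
  unfolding sublinear_def by (metis mult_2 one_add_one scaleR_zero_right zero_less_numeral
      add_cancel_left_left mult.commute)

lemma fo_star:
  assumes p: "sublinear p" and q: "sublinear q"
    and ineq: "\<And>v. s \<bullet> v \<le> p v - q v"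
  shows "s \<in> star_diff (subdiff p 0) (subdiff q 0)"
  unfolding star_diff_def subdiff_def
proof (rule CollectI, rule subsetI)
  fix x assume "x \<in> (\<lambda>b. s + b) ` {s. \<forall>y. q 0 + s \<bullet> (y - 0) \<le> q y}"
  then obtain b where b: "\<forall>y. q 0 + b \<bullet> (y - 0) \<le> q y" and x: "x = s + b" by blast
  have "\<forall>y. p 0 + (s + b) \<bullet> (y - 0) \<le> p y"
  proof
    fix y
    have "b \<bullet> y \<le> q y" using b[rule_format, of y] sublinear_zero[OF q] by simp
    then show "p 0 + (s + b) \<bullet> (y - 0) \<le> p y" using ineq[of y] sublinear_zero[OF p] by (simp add: inner_add_left)
  qed
  then show "x \<in> {s. \<forall>y. p 0 + s \<bullet> (y - 0) \<le> p y}" using x by simp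
qed

lemma norm_quad_bound:
  fixes z0 d :: "'a::real_inner"
  assumes "z0 \<noteq> 0"
  shows "norm (z0 + d) \<le> norm z0 + ((1 / norm z0) *\<^sub>R z0) \<bullet> d + (norm d)^2 / (2 * norm z0)"
proof -
  define n where "n = norm z0"
  have n: "n > 0" using assms unfolding n_def by simp
  have sq: "(norm (z0 + d))^2 = n^2 + 2 * (z0 \<bullet> d) + (norm d)^2"
    unfolding n_def by (simp add: power2_norm_eq_inner inner_add_left inner_add_right inner_commute)
  have "2 * n * norm (z0 + d) \<le> (norm (z0 + d))^2 + n^2"
    using sum_squares_bound[of n "norm (z0 + d)"] by (simp add: power2_eq_square mult.commute)
  also have "\<dots> = 2 * n^2 + 2 * (z0 \<bullet> d) + (norm d)^2" using sq by simp
  finally have "2 * n * norm (z0 + d) \<le> 2 * n^2 + 2 * (z0 \<bullet> d) + (norm d)^2" .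
  then have "norm (z0 + d) \<le> (2 * n^2 + 2 * (z0 \<bullet> d) + (norm d)^2) / (2 * n)"
    using n by (simp add: field_simps)
  also have "\<dots> = n + ((1 / n) *\<^sub>R z0) \<bullet> d + (norm d)^2 / (2 * n)"
    using n by (simp add: field_simps power2_eq_square)
  finally show ?thesis unfolding n_def .
qed

lemma pen_deriv:
  fixes y a v :: "'a::euclidean_space" and \<eta> :: real
  assumes eta: "\<eta> > 0"
  shows "((\<lambda>t. (norm (y + t *\<^sub>R v - a, \<eta>) - norm (y - a, \<eta>)) / t) \<longlongrightarrow> ((y - a) \<bullet> v) / norm (y - a, \<eta>)) (at_right 0)"
proof -
  define P where "P = (y - a, \<eta>)"
  have P0: "P \<noteq> 0" unfolding P_def using eta by (simp add: zero_prod_def)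
  have d1: "((\<lambda>t. (y + t *\<^sub>R v - a, \<eta>)) has_derivative (\<lambda>t. (t *\<^sub>R v, 0))) (at 0)"
    by (auto intro!: derivative_eq_intros)
  have d2: "(norm has_derivative (\<lambda>h. h \<bullet> sgn P)) (at (y + 0 *\<^sub>R v - a, \<eta>))"
    using has_derivative_norm[OF P0] unfolding P_def by simp
  have d3: "((\<lambda>t. norm (y + t *\<^sub>R v - a, \<eta>)) has_derivative (\<lambda>t. (t *\<^sub>R v, 0) \<bullet> sgn P)) (at 0)"
    using has_derivative_compose[OF d1 d2] by (simp add: o_def)
  define D where "D = (v, 0::real) \<bullet> sgn P"
  have eqf: "(\<lambda>t. (t *\<^sub>R v, 0::real) \<bullet> sgn P) = (\<lambda>t. D * t)"
  proof
    fix t :: real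
    have "(t *\<^sub>R v, 0::real) = t *\<^sub>R (v, 0)" by simp
    then show "(t *\<^sub>R v, 0::real) \<bullet> sgn P = D * t" unfolding D_def by (simp only: inner_scaleR_left mult.commute)
  qed
  have "((\<lambda>t. norm (y + t *\<^sub>R v - a, \<eta>)) has_field_derivative D) (at 0)"
    unfolding has_field_derivative_def using d3 unfolding eqf by (simp add: mult.commute)
  then have "((\<lambda>t. (norm (y + t *\<^sub>R v - a, \<eta>) - norm (y - a, \<eta>)) / t) \<longlongrightarrow> D) (at 0)"
    unfolding has_field_derivative_iff by simp
  then have lim: "((\<lambda>t. (norm (y + t *\<^sub>R v - a, \<eta>) - norm (y - a, \<eta>)) / t) \<longlongrightarrow> D) (at_right 0)"
    by (rule tendsto_mono[rotated]) (rule at_le, simp)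
  have "D = ((y - a) \<bullet> v) / norm (y - a, \<eta>)"
    unfolding D_def P_def sgn_div_norm by (simp add: inner_commute divide_inverse)
  then show ?thesis using lim by simp
qed

lemma quot_conv:
  fixes h :: "'a::euclidean_space \<Rightarrow> 'b::euclidean_space"
  assumes qd: "scalarly_qd h y"
  shows "\<exists>L. ((\<lambda>t. (1 / t) *\<^sub>R (h (y + t *\<^sub>R v) - h y)) \<longlongrightarrow> L) (at_right 0)"
proof -
  have "\<forall>i. \<exists>l. ((\<lambda>t. (i \<bullet> h (y + t *\<^sub>R v) - i \<bullet> h y) / t) \<longlongrightarrow> l) (at_right 0)"
  proof
    fix i
    obtain p q where "qd_pair h y i p q" using qd unfolding scalarly_qd_def by blast
    then show "\<exists>l. ((\<lambda>t. (i \<bullet> h (y + t *\<^sub>R v) - i \<bullet> h y) / t) \<longlongrightarrow> l) (at_right 0)"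
      unfolding qd_pair_def by blast
  qed
  then obtain l where l: "\<And>i. ((\<lambda>t. (i \<bullet> h (y + t *\<^sub>R v) - i \<bullet> h y) / t) \<longlongrightarrow> l i) (at_right 0)"
    by metis
  have "((\<lambda>t. \<Sum>i\<in>Basis. ((i \<bullet> h (y + t *\<^sub>R v) - i \<bullet> h y) / t) *\<^sub>R i) \<longlongrightarrow> (\<Sum>i\<in>Basis. l i *\<^sub>R i)) (at_right 0)"
    by (intro tendsto_sum tendsto_scaleR l tendsto_const)
  moreover have "(\<lambda>t. \<Sum>i\<in>Basis. ((i \<bullet> h (y + t *\<^sub>R v) - i \<bullet> h y) / t) *\<^sub>R i) = (\<lambda>t. (1 / t) *\<^sub>R (h (y + t *\<^sub>R v) - h y))"
  proof
    fix t
    have "(\<Sum>i\<in>Basis. ((i \<bullet> h (y + t *\<^sub>R v) - i \<bullet> h y) / t) *\<^sub>R i) = (\<Sum>i\<in>Basis. (((1 / t) *\<^sub>R (h (y + t *\<^sub>R v) - h y)) \<bullet> i) *\<^sub>R i)"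
      by (intro sum.cong refl) (simp add: inner_diff_left inner_diff_right inner_commute divide_inverse mult.commute)
    also have "\<dots> = (1 / t) *\<^sub>R (h (y + t *\<^sub>R v) - h y)" by (rule euclidean_representation)
    finally show "(\<Sum>i\<in>Basis. ((i \<bullet> h (y + t *\<^sub>R v) - i \<bullet> h y) / t) *\<^sub>R i) = (1 / t) *\<^sub>R (h (y + t *\<^sub>R v) - h y)" .
  qed
  ultimately show ?thesis by auto
qed

lemma ineq_step:
  fixes z0 d :: "'a::real_inner"
  assumes t: "t > 0" and z0: "z0 \<noteq> 0"
    and le: "norm z0 + c * N \<le> norm (z0 + d) + c * Nt"
  shows "0 \<le> ((1 / norm z0) *\<^sub>R z0) \<bullet> d / t + t * (norm ((1 / t) *\<^sub>R d))^2 / (2 * norm z0) + c * ((Nt - N) / t)"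
proof -
  define n where "n = norm z0"
  have n: "n > 0" using z0 unfolding n_def by simp
  have "0 \<le> ((1 / n) *\<^sub>R z0) \<bullet> d + (norm d)^2 / (2 * n) + c * (Nt - N)"
    using norm_quad_bound[OF z0, of d] le unfolding n_def by (simp add: algebra_simps)
  then have "0 \<le> (((1 / n) *\<^sub>R z0) \<bullet> d + (norm d)^2 / (2 * n) + c * (Nt - N)) / t"
    using t by simp
  also have "\<dots> = ((1 / n) *\<^sub>R z0) \<bullet> d / t + t * (norm ((1 / t) *\<^sub>R d))^2 / (2 * n) + c * ((Nt - N) / t)"
    using t n by (simp add: field_simps power2_eq_square)
  finally show ?thesis unfolding n_def .
qed

lemma minimizer_fo:
  fixes h :: "'a::euclidean_space \<Rightarrow> 'a" and y u a :: 'a and \<eta> c :: real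
  assumes qd: "scalarly_qd h y" and ne: "h y \<noteq> u" and eta: "\<eta> > 0" and c: "c > 0"
    and loc: "\<And>v. \<forall>\<^sub>F t in at_right 0. norm (h y - u) + c * norm (y - a, \<eta>)
                 \<le> norm (h (y + t *\<^sub>R v) - u) + c * norm (y + t *\<^sub>R v - a, \<eta>)"
  shows "\<exists>s\<in>star_coqd_set h y (sphere 0 1). norm s < c"
proof -
  define z0 where "z0 = h y - u"
  have z0: "z0 \<noteq> 0" using ne unfolding z0_def by simp
  define n where "n = norm z0"
  have n: "n > 0" using z0 unfolding n_def by simp
  define w where "w = (1 / n) *\<^sub>R z0"
  have w1: "w \<in> sphere 0 1" unfolding w_def n_def using z0 by simp
  define PQ where "PQ = (SOME pq. qd_pair h y w (fst pq) (snd pq))"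
  have "\<exists>pq. qd_pair h y w (fst pq) (snd pq)" using qd unfolding scalarly_qd_def by fastforce
  then have PQ: "qd_pair h y w (fst PQ) (snd PQ)" unfolding PQ_def by (rule someI_ex)
  define p where "p = fst PQ"
  define q where "q = snd PQ"
  have pq: "sublinear p" "sublinear q"
    and lim: "\<And>v. ((\<lambda>t. (w \<bullet> h (y + t *\<^sub>R v) - w \<bullet> h y) / t) \<longlongrightarrow> p v - q v) (at_right 0)"
    using PQ unfolding qd_pair_def p_def q_def by auto
  define N where "N = norm (y - a, \<eta>)"
  have NN: "norm (y - a) < N"
  proof -
    have "(norm (y - a))^2 < (norm (y - a))^2 + \<eta>^2" using eta by simp
    then have "sqrt ((norm (y - a))^2) < sqrt ((norm (y - a))^2 + \<eta>^2)" by (rule real_sqrt_less_mono)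
    then show ?thesis unfolding N_def norm_Pair by simp
  qed
  have N0: "N > 0" using NN norm_ge_zero[of "y - a"] by linarith
  define s where "s = - (c / N) *\<^sub>R (y - a)"
  have ns: "norm s < c"
  proof -
    have "norm s = c * (norm (y - a) / N)" unfolding s_def using c N0 by simp
    also have "\<dots> < c * 1" using NN N0 c by (intro mult_strict_left_mono) auto
    finally show ?thesis by simp
  qed
  have ineq: "s \<bullet> v \<le> p v - q v" for v
  proof -
    obtain Lq where Lq: "((\<lambda>t. (1 / t) *\<^sub>R (h (y + t *\<^sub>R v) - h y)) \<longlongrightarrow> Lq) (at_right 0)"
      using quot_conv[OF qd] by blast
    have T2: "((\<lambda>t. t * (norm ((1 / t) *\<^sub>R (h (y + t *\<^sub>R v) - h y)))^2 / (2 * n)) \<longlongrightarrow> 0 * (norm Lq)^2 / (2 * n)) (at_right 0)"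
      using n by (intro tendsto_intros Lq) auto
    have T3: "((\<lambda>t. c * ((norm (y + t *\<^sub>R v - a, \<eta>) - N) / t)) \<longlongrightarrow> c * (((y - a) \<bullet> v) / N)) (at_right 0)"
      unfolding N_def by (intro tendsto_intros pen_deriv eta)
    have T: "((\<lambda>t. (w \<bullet> h (y + t *\<^sub>R v) - w \<bullet> h y) / t + t * (norm ((1 / t) *\<^sub>R (h (y + t *\<^sub>R v) - h y)))^2 / (2 * n)
              + c * ((norm (y + t *\<^sub>R v - a, \<eta>) - N) / t))
          \<longlongrightarrow> (p v - q v) + 0 * (norm Lq)^2 / (2 * n) + c * (((y - a) \<bullet> v) / N)) (at_right 0)"
      by (intro tendsto_add lim T2 T3)
    have ev: "\<forall>\<^sub>F t in at_right 0. 0 \<le> (w \<bullet> h (y + t *\<^sub>R v) - w \<bullet> h y) / t + t * (norm ((1 / t) *\<^sub>R (h (y + t *\<^sub>R v) - h y)))^2 / (2 * n)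
              + c * ((norm (y + t *\<^sub>R v - a, \<eta>) - N) / t)"
      using loc[of v] eventually_at_right_less[of 0]
    proof eventually_elim
      case (elim t)
      have e: "h (y + t *\<^sub>R v) - u = z0 + (h (y + t *\<^sub>R v) - h y)" unfolding z0_def by simp
      have "0 \<le> ((1 / norm z0) *\<^sub>R z0) \<bullet> (h (y + t *\<^sub>R v) - h y) / t + t * (norm ((1 / t) *\<^sub>R (h (y + t *\<^sub>R v) - h y)))^2 / (2 * norm z0) + c * ((norm (y + t *\<^sub>R v - a, \<eta>) - N) / t)"
        by (rule ineq_step) (use elim z0 in \<open>auto simp: e N_def z0_def[symmetric]\<close>)
      then show ?case unfolding w_def n_def by (simp add: inner_diff_right)
    qed
    have "0 \<le> (p v - q v) + 0 * (norm Lq)^2 / (2 * n) + c * (((y - a) \<bullet> v) / N)"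
      by (rule tendsto_lowerbound[OF T ev]) simp
    moreover have sv: "s \<bullet> v = - ((c / N) * ((y - a) \<bullet> v))" unfolding s_def by (simp only: inner_scaleR_left)
    moreover have "c * (((y - a) \<bullet> v) / N) = (c / N) * ((y - a) \<bullet> v)" by simp
    ultimately show ?thesis by linarith
  qed
  have "s \<in> star_coqd h y w"
    unfolding star_coqd_def Let_def PQ_def[symmetric] p_def[symmetric] q_def[symmetric]
    by (rule fo_star[OF pq ineq])
  then show ?thesis using w1 ns unfolding star_coqd_set_def by blast
qed

lemma local_exp_h:
  fixes h :: "'a::euclidean_space \<Rightarrow> 'a"
  assumes contH: "continuous_on UNIV h" and c: "c > 0" and R: "R > 0"
    and qd: "\<And>y. norm y < R \<Longrightarrow> scalarly_qd h y"
    and usc: "\<And>y. norm y < R \<Longrightarrow> star_coqd_set h y (sphere 0 1) \<subseteq> {z. c < norm z}"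
    and inj: "\<And>y1 y2. norm y1 < R \<Longrightarrow> norm y2 < R \<Longrightarrow> h y1 = h y2 \<Longrightarrow> y1 = y2"
  shows "\<exists>\<rho>>0. \<forall>a\<in>ball 0 \<rho>. \<forall>b\<in>ball 0 \<rho>. c * norm (a - b) \<le> norm (h a - h b)"
proof -
  have "continuous (at 0) h" using contH by (simp add: continuous_on_eq_continuous_at)
  then obtain \<rho>0 where r0: "\<rho>0 > 0" "\<And>z. dist z 0 < \<rho>0 \<Longrightarrow> dist (h z) (h 0) < c * R / 8"
    unfolding continuous_at_eps_delta using c R by (metis divide_pos_pos mult_pos_pos zero_less_numeral)
  define \<rho> where "\<rho> = min \<rho>0 (R / 4)"
  have rho: "\<rho> > 0" unfolding \<rho>_def using r0 R by simp
  show ?thesis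
  proof (intro exI[of _ \<rho>] conjI rho ballI)
    fix a b :: 'a assume a: "a \<in> ball 0 \<rho>" and b: "b \<in> ball 0 \<rho>"
    have na: "norm a < R / 4" "norm a < \<rho>0" and nb: "norm b < R / 4" "norm b < \<rho>0" using a b unfolding \<rho>_def by auto
    define r where "r = norm (h a - h b)"
    have "norm (h a - h 0) < c * R / 8" "norm (h b - h 0) < c * R / 8"
      using r0(2)[of a] r0(2)[of b] na nb by (auto simp: dist_norm)
    then have rR: "r < c * R / 4" unfolding r_def using norm_triangle_ineq4[of "h a - h 0" "h b - h 0"] by simp
    have main: "norm (b - a) \<le> r / c + \<eta>" if eta: "0 < \<eta>" "\<eta> < R / 8" for \<eta>
    proof -
      define u where "u = h b"
      define \<psi> where "\<psi> z = norm (h z - u) + c * norm (z - a, \<eta>)" for z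
      have cpsi: "continuous_on (cball a (R / 2)) \<psi>" unfolding \<psi>_def
        by (intro continuous_intros continuous_on_subset[OF contH]) auto
      obtain y where y: "y \<in> cball a (R / 2)" and ymin: "\<And>z. z \<in> cball a (R / 2) \<Longrightarrow> \<psi> y \<le> \<psi> z"
        using continuous_attains_inf[OF compact_cball _ cpsi] R by force
      have "\<psi> y \<le> \<psi> a" using ymin R by simp
      also have "\<psi> a = r + c * \<eta>" unfolding \<psi>_def u_def r_def using eta by (simp add: norm_Pair)
      finally have psiy: "\<psi> y \<le> r + c * \<eta>" .
      have "norm (y - a) \<le> norm (y - a, \<eta>)" unfolding norm_Pair by (simp add: real_le_rsqrt)
      then have "c * norm (y - a) \<le> c * norm (y - a, \<eta>)" using c by simp
      also have "\<dots> \<le> \<psi> y" unfolding \<psi>_def by simp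
      finally have "c * norm (y - a) \<le> r + c * \<eta>" using psiy by simp
      then have ya: "norm (y - a) \<le> r / c + \<eta>" using c by (simp add: field_simps)
      have "r / c < R / 4" using rR c by (simp add: field_simps)
      then have ya2: "norm (y - a) < 3 * R / 8" using ya eta by simp
      have "norm y \<le> norm (y - a) + norm a" using norm_triangle_ineq[of "y - a" a] by simp
      then have ny: "norm y < R" using ya2 na R by linarith
      have "h y = u"
      proof (rule ccontr)
        assume ne: "h y \<noteq> u"
        have loc: "\<forall>\<^sub>F t in at_right 0. norm (h y - u) + c * norm (y - a, \<eta>)
                 \<le> norm (h (y + t *\<^sub>R v) - u) + c * norm (y + t *\<^sub>R v - a, \<eta>)" for v
        proof -
          define m where "m = (R / 8) / (norm v + 1)"
          have m: "m > 0" unfolding m_def using R by (intro divide_pos_pos) (auto intro: add_nonneg_pos)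
          show ?thesis unfolding eventually_at_right_field
          proof (intro exI[of _ m] conjI m allI impI)
            fix t :: real assume t: "0 < t" "t < m"
            have "norm (t *\<^sub>R v) = t * norm v" using t by simp
            also have "\<dots> \<le> m * norm v" using t by (intro mult_right_mono) auto
            also have "\<dots> = R / 8 * (norm v / (norm v + 1))" unfolding m_def by simp
            also have "\<dots> \<le> R / 8 * 1" using R by (intro mult_left_mono) (auto simp: divide_le_eq_1 add_nonneg_pos)
            also have "\<dots> = R / 8" by simp
            finally have "norm (y + t *\<^sub>R v - a) \<le> R / 2"
              using ya2 norm_triangle_ineq[of "y - a" "t *\<^sub>R v"] by (simp add: algebra_simps)
            then have "y + t *\<^sub>R v \<in> cball a (R / 2)" by (simp add: dist_norm norm_minus_commute)
            from ymin[OF this] show "norm (h y - u) + c * norm (y - a, \<eta>)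
                 \<le> norm (h (y + t *\<^sub>R v) - u) + c * norm (y + t *\<^sub>R v - a, \<eta>)" unfolding \<psi>_def .
          qed
        qed
        obtain s where "s \<in> star_coqd_set h y (sphere 0 1)" "norm s < c"
          using minimizer_fo[OF qd[OF ny] ne eta(1) c loc] by blast
        then show False using usc[OF ny] by force
      qed
      then have "y = b" using inj[OF ny] nb R unfolding u_def by simp
      then show ?thesis using ya by simp
    qed
    have "norm (b - a) \<le> r / c"
    proof (rule field_le_epsilon)
      fix e :: real assume e: "e > 0"
      have "norm (b - a) \<le> r / c + min e (R / 16)" using main[of "min e (R / 16)"] e R by simp
      then show "norm (b - a) \<le> r / c + e" by simp
    qed
    then show "c * norm (a - b) \<le> norm (h a - h b)" using c unfolding r_def by (simp add: field_simps norm_minus_commute)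
  qed
qed



lemma dch_cont:
  fixes g :: "'a::euclidean_space \<Rightarrow> 'b::euclidean_space"
  assumes dch: "\<forall>w. (\<lambda>v. w \<bullet> g v) \<in> DCH"
  shows "continuous_on UNIV g"
proof -
  have ci: "continuous_on UNIV (\<lambda>v. i \<bullet> g v)" for i
  proof -
    obtain p q where pq: "sublinear p" "sublinear q" "(\<lambda>v. i \<bullet> g v) = (\<lambda>v. p v - q v)"
      using dch unfolding DCH_def by blast
    have "continuous_on UNIV p" "continuous_on UNIV q"
      using pq(1,2) unfolding sublinear_def by (auto intro: convex_on_continuous)
    then show ?thesis unfolding pq(3) by (intro continuous_intros)
  qed
  have "continuous_on UNIV (\<lambda>v. \<Sum>i\<in>Basis. (i \<bullet> g v) *\<^sub>R i)"
    by (intro continuous_intros ci)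
  moreover have "(\<lambda>v. \<Sum>i\<in>Basis. (i \<bullet> g v) *\<^sub>R i) = g"
  proof
    fix v
    show "(\<Sum>i\<in>Basis. (i \<bullet> g v) *\<^sub>R i) = g v"
      using euclidean_representation[of "g v"] by (simp add: inner_commute)
  qed
  ultimately show ?thesis by metis
qed

lemma LE_f:
  fixes f :: "'a::euclidean_space \<Rightarrow> 'a" and h :: "'a \<Rightarrow> 'a \<Rightarrow> 'a" and \<mu> :: real
  assumes est: "\<forall>x. strict_estimator (\<lambda>t. f x + h x (t - x)) f x \<mu>"
    and dch: "\<forall>x w. (\<lambda>v. w \<bullet> h x v) \<in> DCH"
    and cC: "\<forall>x. condC (h x) 0"
    and flat: "ereal (\<kappa> + \<mu>) < (INF x. dist0 (star_coqd_set (h x) 0 (sphere 0 1)))"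
    and minj: "\<forall>x. metrically_injective (h x) 0"
    and k: "\<kappa> > 0" and mu: "\<mu> \<ge> 0"
  shows "LE f \<kappa>"
  unfolding LE_def
proof
  fix x
  define D0 where "D0 = star_coqd_set (h x) 0 (sphere 0 1)"
  have "(INF x. dist0 (star_coqd_set (h x) 0 (sphere 0 1))) \<le> dist0 D0" unfolding D0_def by (rule INF_lower) simp
  then obtain c where c1: "ereal (\<kappa> + \<mu>) < ereal c" and c2: "ereal c < dist0 D0"
    using ereal_dense2[OF flat] by (meson less_le_trans)
  have c: "\<kappa> + \<mu> < c" using c1 by simp
  have D0U: "D0 \<subseteq> {z. c < norm z}"
  proof
    fix z assume z: "z \<in> D0"
    then have "D0 \<noteq> {}" by blast
    then have "c < infdist 0 D0" using c2 unfolding dist0_def by simp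
    also have "infdist 0 D0 \<le> norm z" using infdist_le[OF z, of 0] by simp
    finally show "z \<in> {z. c < norm z}" by simp
  qed
  have oU: "open {z::'a. c < norm z}" by (rule open_Collect_less) (auto intro: continuous_intros)
  obtain \<delta>1 where d1: "\<delta>1 > 0" "\<forall>y\<in>ball 0 \<delta>1. scalarly_qd (h x) y"
    using cC unfolding condC_def by blast
  obtain \<delta>2 where d2: "\<delta>2 > 0" "\<forall>y. norm (y - 0) \<le> \<delta>2 \<longrightarrow> star_coqd_set (h x) y (sphere 0 1) \<subseteq> {z. c < norm z}"
    using cC D0U oU unfolding condC_def D0_def by blast
  obtain \<beta> \<delta>3 where d3: "\<beta> > 0" "\<delta>3 > 0" "\<forall>x1 x2. dist x1 0 \<le> \<delta>3 \<and> dist x2 0 \<le> \<delta>3 \<longrightarrow> \<beta> * norm (x1 - x2) \<le> norm (h x x1 - h x x2)"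
    using minj unfolding metrically_injective_def metric_inj_consts_def by blast
  define R where "R = min \<delta>1 (min \<delta>2 \<delta>3)"
  have R: "R > 0" unfolding R_def using d1 d2 d3 by simp
  have contH: "continuous_on UNIV (h x)" using dch by (intro dch_cont) auto
  have c0: "c > 0" using c k mu by linarith
  obtain \<rho> where rho: "\<rho> > 0" "\<forall>a\<in>ball 0 \<rho>. \<forall>b\<in>ball 0 \<rho>. c * norm (a - b) \<le> norm (h x a - h x b)"
  proof -
    have "\<exists>\<rho>>0. \<forall>a\<in>ball 0 \<rho>. \<forall>b\<in>ball 0 \<rho>. c * norm (a - b) \<le> norm (h x a - h x b)"
    proof (rule local_exp_h[OF contH c0 R])
      fix y :: 'a assume "norm y < R"
      then show "scalarly_qd (h x) y" using d1 unfolding R_def by auto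
    next
      fix y :: 'a assume "norm y < R"
      then show "star_coqd_set (h x) y (sphere 0 1) \<subseteq> {z. c < norm z}" using d2 unfolding R_def by auto
    next
      fix y1 y2 :: 'a assume "norm y1 < R" "norm y2 < R" "h x y1 = h x y2"
      then have "\<beta> * norm (y1 - y2) \<le> 0" using d3(3)[rule_format, of y1 y2] unfolding R_def by auto
      then show "y1 = y2" using d3(1) by (simp add: mult_le_0_iff)
    qed
    then show ?thesis using that by blast
  qed
  define e where "e t = f t - (f x + h x (t - x))" for t
  have "lip e x \<le> ereal \<mu>" using est unfolding strict_estimator_def e_def by blast
  also have "\<dots> < ereal (c - \<kappa>)" using c by simp
  finally have "Inf (ereal ` {l. l > 0 \<and> (\<exists>\<delta>>0. \<forall>x1\<in>ball x \<delta>. \<forall>x2\<in>ball x \<delta>.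
        norm (e x1 - e x2) \<le> l * norm (x1 - x2))}) < ereal (c - \<kappa>)" unfolding lip_def .
  then obtain l \<delta>e where l: "l < c - \<kappa>" "\<delta>e > 0" "\<forall>x1\<in>ball x \<delta>e. \<forall>x2\<in>ball x \<delta>e. norm (e x1 - e x2) \<le> l * norm (x1 - x2)"
    unfolding Inf_less_iff by auto
  show "\<exists>\<delta>>0. \<forall>s\<in>ball x \<delta>. \<forall>t\<in>ball x \<delta>. \<kappa> * norm (s - t) \<le> norm (f s - f t)"
  proof (intro exI[of _ "min \<delta>e \<rho>"] conjI ballI)
    show "min \<delta>e \<rho> > 0" using l rho by simp
    fix s t assume s: "s \<in> ball x (min \<delta>e \<rho>)" and t: "t \<in> ball x (min \<delta>e \<rho>)"
    have "s - x \<in> ball 0 \<rho>" "t - x \<in> ball 0 \<rho>" using s t by (auto simp: dist_norm norm_minus_commute)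
    then have hc: "c * norm (s - t) \<le> norm (h x (s - x) - h x (t - x))" using rho(2) by fastforce
    have el: "norm (e s - e t) \<le> l * norm (s - t)" using l(3) s t by auto
    have fst: "f s - f t = (h x (s - x) - h x (t - x)) + (e s - e t)" unfolding e_def by (simp add: algebra_simps)
    have "norm (h x (s - x) - h x (t - x)) \<le> norm (f s - f t) + norm (e s - e t)"
      unfolding fst using norm_triangle_ineq4[of "h x (s - x) - h x (t - x) + (e s - e t)" "e s - e t"] by simp
    then have "c * norm (s - t) - l * norm (s - t) \<le> norm (f s - f t)" using hc el by linarith
    moreover have "\<kappa> * norm (s - t) \<le> c * norm (s - t) - l * norm (s - t)"
    proof -
      have "\<kappa> \<le> c - l" using l by simp
      then have "\<kappa> * norm (s - t) \<le> (c - l) * norm (s - t)" by (rule mult_right_mono) simp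
      then show ?thesis by (simp add: algebra_simps)
    qed
    ultimately show "\<kappa> * norm (s - t) \<le> norm (f s - f t)" by linarith
  qed
qed

theorem mainTheorem9:
  fixes f :: "'a::euclidean_space \<Rightarrow> 'a" and h :: "'a \<Rightarrow> 'a \<Rightarrow> 'a" and \<mu> :: real
  assumes cont: "continuous_on UNIV f"
    and mu: "\<mu> \<ge> 0"
    and est: "\<forall>x. strict_estimator (\<lambda>t. f x + h x (t - x)) f x \<mu>"
    and dch: "\<forall>x w. (\<lambda>v. w \<bullet> h x v) \<in> DCH"
    and cC: "\<forall>x. condC (h x) 0"
    and flat: "(INF x. dist0 (star_coqd_set (h x) 0 (sphere 0 1))) > ereal \<mu>"
    and minj: "\<forall>x. metrically_injective (h x) 0 \<and> inj_mod (h x) 0 > ereal \<mu>"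
  shows "bij f \<and>
    (\<forall>y1 y2. ereal (norm (inv f y1 - inv f y2)) \<le>
       inverse ((INF x. dist0 (star_coqd_set (h x) 0 (sphere 0 1))) - ereal \<mu>) * ereal (norm (y1 - y2)))"
proof -
  define F where "F = (INF x. dist0 (star_coqd_set (h x) 0 (sphere 0 1)))"
  have minj': "\<forall>x. metrically_injective (h x) 0" using minj by blast
  have key: "bij f \<and> (\<forall>y1 y2. \<kappa> * norm (inv f y1 - inv f y2) \<le> norm (y1 - y2))"
    if k: "\<kappa> > 0" and kf: "ereal (\<kappa> + \<mu>) < F" for \<kappa>
    using global_inv[OF cont k LE_f[OF est dch cC kf[unfolded F_def] minj' k mu]] .
  show ?thesis
  proof (cases F)
    case (real r)
    have rm: "r > \<mu>" using flat real unfolding F_def by simp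
    have "(r - \<mu>) / 2 + \<mu> < r" using rm by (simp add: field_simps)
    then have bf: "bij f" using key[of "(r - \<mu>) / 2"] rm real by simp
    have bd: "norm (inv f y1 - inv f y2) \<le> norm (y1 - y2) / (r - \<mu>)" for y1 y2
    proof -
      define d where "d = norm (inv f y1 - inv f y2)"
      define D where "D = norm (y1 - y2)"
      have kd: "\<kappa> * d \<le> D" if "0 < \<kappa>" "\<kappa> < r - \<mu>" for \<kappa>
        using key[of \<kappa>] that real unfolding d_def D_def by simp
      have "d * (r - \<mu>) \<le> D"
      proof (rule ccontr)
        assume "\<not> d * (r - \<mu>) \<le> D"
        then have gt: "D < d * (r - \<mu>)" by simp
        have D0: "D \<ge> 0" unfolding D_def by simp
        have "d \<ge> 0" unfolding d_def by simp
        then have dpos: "d > 0" using gt D0 by (cases "d = 0") auto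
        define x where "x = D / d"
        define \<kappa> where "\<kappa> = (x + (r - \<mu>)) / 2"
        have Dd: "x < r - \<mu>" unfolding x_def using gt dpos by (simp add: field_simps)
        have "x \<ge> 0" unfolding x_def using D0 dpos by simp
        then have k3: "0 < \<kappa>" "\<kappa> < r - \<mu>" "x < \<kappa>" unfolding \<kappa>_def using Dd by auto
        then have k3: "0 < \<kappa>" "\<kappa> < r - \<mu>" "D / d < \<kappa>" unfolding x_def by auto
        have "\<kappa> * d \<le> D" using kd k3 by blast
        moreover have "D < \<kappa> * d" using k3(3) dpos by (simp add: divide_less_eq)
        ultimately show False by simp
      qed
      then show ?thesis using rm unfolding d_def D_def by (simp add: field_simps)
    qed
    show ?thesis
    proof (intro conjI bf allI)
      fix y1 y2 :: 'a
      have "inverse (F - ereal \<mu>) * ereal (norm (y1 - y2)) = ereal (norm (y1 - y2) / (r - \<mu>))"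
        using real rm by (simp add: divide_inverse mult.commute)
      then show "ereal (norm (inv f y1 - inv f y2)) \<le> inverse ((INF x. dist0 (star_coqd_set (h x) 0 (sphere 0 1))) - ereal \<mu>) * ereal (norm (y1 - y2))"
        using bd[of y1 y2] unfolding F_def by simp
    qed
  next
    case PInf
    have bf: "bij f" using key[of 1] PInf by simp
    have bd: "norm (inv f y1 - inv f y2) = 0" for y1 y2
    proof (rule ccontr)
      define d where "d = norm (inv f y1 - inv f y2)"
      define D where "D = norm (y1 - y2)"
      assume "norm (inv f y1 - inv f y2) \<noteq> 0"
      then have dpos: "d > 0" unfolding d_def by simp
      have kp: "(D + 1) / d > 0" using dpos unfolding D_def by (simp add: add_nonneg_pos)
      have "ereal ((D + 1) / d + \<mu>) < F" using PInf by simp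
      from key[OF kp this] have "((D + 1) / d) * d \<le> D" unfolding d_def D_def by blast
      then show False using dpos by simp
    qed
    show ?thesis using bf bd PInf unfolding F_def by simp
  next
    case MInf
    then show ?thesis using flat unfolding F_def by simp
  qed
qed

end
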